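(* Let $s\ge 1$, $q=4^{2s}$, and let $\theta$ be the automorphism of $F_q$ given by $\theta(a)=a^{4^s}$. Let $n$ be an even positive integer and suppose $x^n-1=h(x)g(x)$ in $F_q[x;\theta]$, where the degree of $g(x)$ is even. If $h(x)$ is a palindromic polynomial, then $g(x)$ is also a palindromic polynomial.
   Context: $F_q[x;\theta]$ is the skew polynomial ring: polynomials $\sum a_ix^i$ with $a_i\in F_q$, usual addition, and multiplication determined by $xa=\theta(a)x$ for $a\in F_q$. A polynomial $f(x)=a_0+a_1x+\dots+a_tx^t$ of degree $t$ is palindromic if $a_i=a_{t-i}$ for all $i\in\{0,\ldots,t\}$. *)

theory Defs
  imports "HOL-Computational_Algebra.Polynomial"
begin

text \<open>Skew polynomial ring F[x;theta]: elements are represented by their coefficient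
  sequences (type 'a poly); addition is the usual one, multiplication is determined by
  x a = theta(a) x, i.e. (sum a_i x^i)(sum b_j x^j) = sum a_i theta^i(b_j) x^(i+j).\<close>

definition skew_mult :: "('a::comm_ring_1 \<Rightarrow> 'a) \<Rightarrow> 'a poly \<Rightarrow> 'a poly \<Rightarrow> 'a poly" where
  "skew_mult \<theta> p q = (\<Sum>i\<le>degree p. monom (coeff p i) i * map_poly (\<theta> ^^ i) q)"

definition palindromic :: "'a::zero poly \<Rightarrow> bool" where
  "palindromic f \<longleftrightarrow> (\<forall>i\<le>degree f. coeff f i = coeff f (degree f - i))"

end

theory Submission
  imports Defs
begin

lemma fin_field_pow_card:
  fixes a :: "'a::{field,finite}"
  shows "a ^ card (UNIV::'a set) = a"
proof (cases "a = 0")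
  case True
  then show ?thesis by (simp add: card_gt_0_iff)
next
  case False
  let ?S = "UNIV - {0::'a}"
  have fin: "finite ?S" by simp
  have bij: "bij_betw (\<lambda>x. a * x) ?S ?S"
    unfolding bij_betw_def inj_on_def
  proof (intro conjI ballI impI)
    show "(\<lambda>x. a * x) ` ?S = ?S"
    proof
      show "(\<lambda>x. a * x) ` ?S \<subseteq> ?S" using False by auto
      show "?S \<subseteq> (\<lambda>x. a * x) ` ?S"
      proof
        fix y assume "y \<in> ?S"
        then have "y = a * (y / a)" "y / a \<in> ?S" using False by auto
        then show "y \<in> (\<lambda>x. a * x) ` ?S" by blast
      qed
    qed
  qed (use False in auto)
  have "prod (\<lambda>x. x) ?S = prod (\<lambda>x. a * x) ?S"
    using prod.reindex_bij_betw[OF bij, of "\<lambda>x. x"] by simp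
  also have "\<dots> = a ^ card ?S * prod (\<lambda>x. x) ?S"
    by (simp add: prod.distrib)
  finally have eq: "prod (\<lambda>x. x) ?S = a ^ card ?S * prod (\<lambda>x. x) ?S" .
  have nz: "prod (\<lambda>x. x) ?S \<noteq> 0" using fin by (simp add: prod_zero_iff)
  have "a ^ card ?S = 1" using eq nz by (metis mult_cancel_right1)
  moreover have "card ?S = card (UNIV::'a set) - 1" by (simp add: card_Diff_singleton)
  moreover have "card (UNIV::'a set) = Suc (card (UNIV::'a set) - 1)" by (simp add: card_gt_0_iff)
  ultimately show ?thesis by (metis mult_1 power_Suc2 mult.commute)
qed

lemma funpow_invol:
  assumes "\<And>a. T (T a) = a"
  shows "(T ^^ i) x = (if even i then x else T x)"
  by (induction i) (auto simp: assms)

lemma funpow_zero: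
  fixes T :: "'a::zero \<Rightarrow> 'a"
  assumes "T 0 = 0"
  shows "(T ^^ i) 0 = 0"
  by (induction i) (auto simp: assms)

lemma coeff_skew:
  fixes T :: "'a::comm_ring_1 \<Rightarrow> 'a"
  assumes "T 0 = 0"
  shows "coeff (skew_mult T p q) j =
    (\<Sum>i\<le>degree p. if i \<le> j then coeff p i * (T ^^ i) (coeff q (j - i)) else 0)"
  unfolding skew_mult_def coeff_sum
  by (rule sum.cong) (auto simp: coeff_monom_mult coeff_map_poly funpow_zero[where T=T, OF assms])

lemma sum_restrict_le:
  fixes f :: "nat \<Rightarrow> 'a::comm_monoid_add"
  assumes "\<And>i. i > K \<Longrightarrow> f i = 0"
  shows "(\<Sum>i\<le>K. if i \<le> j then f i else 0) = (\<Sum>i\<le>j. f i)"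
proof -
  have "(\<Sum>i\<le>K. if i \<le> j then f i else 0) = (\<Sum>i\<in>{..K} \<inter> {..j}. f i)"
    by (subst sum.inter_restrict) simp_all
  also have "\<dots> = (\<Sum>i\<le>j. f i)"
    by (rule sum.mono_neutral_left) (auto, metis assms not_le)
  finally show ?thesis .
qed

lemma cancel_left:
  fixes h X Y :: "nat \<Rightarrow> 'a::field"
  assumes "h 0 \<noteq> 0"
    and inj: "\<And>i a b. (T ^^ i) a = (T ^^ i) b \<Longrightarrow> a = b"
    and eq: "\<And>j. (\<Sum>i\<le>j. h i * (T ^^ i) (X (j - i))) = (\<Sum>i\<le>j. h i * (T ^^ i) (Y (j - i)))"
  shows "X j = Y j"
proof (induction j rule: less_induct)
  case (less j)
  show ?case
  proof (cases j)
    case 0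
    then show ?thesis using eq[of 0] assms(1) by simp
  next
    case (Suc j')
    have "(\<Sum>i\<le>j'. h (Suc i) * (T ^^ Suc i) (X (j - Suc i)))
        = (\<Sum>i\<le>j'. h (Suc i) * (T ^^ Suc i) (Y (j - Suc i)))"
      by (rule sum.cong) (auto simp: less Suc)
    then have "h 0 * X j = h 0 * Y j"
      using eq[of j] unfolding Suc sum.atMost_Suc_shift by simp
    then show ?thesis using assms(1) by simp
  qed
qed

theorem theorem3:
  fixes s n :: nat and h g :: "'a::{field,finite} poly"
  assumes "s \<ge> 1"
    and "card (UNIV :: 'a set) = 4 ^ (2 * s)"
    and "n > 0" and "even n"
    and "monom 1 n - 1 = skew_mult (\<lambda>a. a ^ (4 ^ s)) h g"
    and "even (degree g)"
    and "palindromic h"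
  shows "palindromic g"
proof -
  define T where "T = (\<lambda>a::'a. a ^ (4 ^ s))"
  define P where "P = (monom 1 n - 1 :: 'a poly)"
  define k where "k = degree h"
  define m where "m = degree g"
  have PT: "P = skew_mult T h g" using assms(5) unfolding P_def T_def .
  have T0: "T 0 = 0" unfolding T_def by simp
  have invol: "\<And>a. T (T a) = a"
  proof -
    fix a :: 'a
    have "T (T a) = a ^ (4 ^ s * 4 ^ s)" unfolding T_def by (simp add: power_mult)
    also have "4 ^ s * 4 ^ s = (4::nat) ^ (2 * s)" by (simp add: power_add[symmetric] mult_2)
    also have "a ^ (4 ^ (2 * s)) = a" using fin_field_pow_card[of a] assms(2) by simp
    finally show "T (T a) = a" .
  qed
  have Tpow: "\<And>i x. (T ^^ i) x = (if even i then x else T x)"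
    by (rule funpow_invol[OF invol])
  have Tinj: "\<And>i a b. (T ^^ i) a = (T ^^ i) b \<Longrightarrow> a = b"
    by (metis Tpow invol)
  have Tpow0: "\<And>i. (T ^^ i) 0 = 0" by (simp add: Tpow T0)
  have char2: "(-1::'a) = 1"
  proof -
    have ev: "even (card (UNIV :: 'a set))" using assms(1,2) by simp
    have "(-1::'a) ^ card (UNIV :: 'a set) = -1" by (rule fin_field_pow_card)
    then show ?thesis using ev by simp
  qed
  have coeffP: "\<And>j. coeff P j = (if j = n then 1 else 0) - (if j = 0 then 1 else 0)"
    unfolding P_def by simp
  have CF: "\<And>j. coeff P j = (\<Sum>i\<le>k. if i \<le> j then coeff h i * (T ^^ i) (coeff g (j - i)) else 0)"
    unfolding PT k_def by (rule coeff_skew[where T=T, OF T0])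
  have Pn: "coeff P n = 1" using assms(3) coeffP by simp
  have h0: "h \<noteq> 0"
  proof
    assume "h = 0"
    then have "coeff P n = 0" unfolding CF k_def by simp
    with Pn show False by simp
  qed
  have g0: "g \<noteq> 0"
  proof
    assume "g = 0"
    then have "coeff P n = 0" unfolding CF by (intro sum.neutral) (simp add: Tpow0)
    with Pn show False by simp
  qed
  have hk: "coeff h k \<noteq> 0" using h0 unfolding k_def by simp
  have gm: "coeff g m \<noteq> 0" using g0 unfolding m_def by simp
  have vanish: "\<And>j. j > k + m \<Longrightarrow> coeff P j = 0"
  proof -
    fix j assume "j > k + m"
    then have "\<And>i. i \<le> k \<Longrightarrow> coeff g (j - i) = 0"
      unfolding m_def by (intro coeff_eq_0) auto
    then show "coeff P j = 0" unfolding CF by (intro sum.neutral) (auto simp: Tpow0)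
  qed
  have top: "coeff P (k + m) = coeff h k * (T ^^ k) (coeff g m)"
  proof -
    have "coeff P (k + m) = (\<Sum>i\<in>{k}. if i \<le> k + m then coeff h i * (T ^^ i) (coeff g (k + m - i)) else 0)"
      unfolding CF
    proof (rule sum.mono_neutral_right)
      show "\<forall>i\<in>{..k} - {k}. (if i \<le> k + m then coeff h i * (T ^^ i) (coeff g (k + m - i)) else 0) = 0"
      proof
        fix i assume "i \<in> {..k} - {k}"
        then have "k + m - i > m" by auto
        then have "coeff g (k + m - i) = 0" unfolding m_def by (intro coeff_eq_0) auto
        then show "(if i \<le> k + m then coeff h i * (T ^^ i) (coeff g (k + m - i)) else 0) = 0"
          by (simp add: Tpow0)
      qed
    qed auto
    then show ?thesis by simp
  qed
  have topnz: "coeff P (k + m) \<noteq> 0"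
    using top hk gm Tinj[of k "coeff g m" 0] Tpow0 by auto
  have nkm: "n = k + m"
  proof -
    have "n \<le> k + m" using Pn vanish by (metis not_le zero_neq_one)
    moreover have "k + m = n \<or> k + m = 0" using topnz coeffP by (auto split: if_splits)
    ultimately show ?thesis using assms(3) by auto
  qed
  have keven: "even k" using assms(4,6) nkm unfolding m_def by simp
  have hpal: "\<And>i. i \<le> k \<Longrightarrow> coeff h i = coeff h (k - i)"
    using assms(7) unfolding palindromic_def k_def by blast
  have h00: "coeff h 0 \<noteq> 0" using hpal[of 0] hk by simp
  define Rg where "Rg = (\<lambda>j. if j \<le> m then coeff g (m - j) else 0)"
  have Psym: "\<And>j. j \<le> n \<Longrightarrow> coeff P (n - j) = coeff P j"
    using coeffP char2 assms(3) by auto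
  have key: "\<And>j. (\<Sum>i\<le>j. coeff h i * (T ^^ i) (Rg (j - i)))
      = (\<Sum>i\<le>j. coeff h i * (T ^^ i) (coeff g (j - i)))"
  proof -
    fix j
    have hz: "\<And>i. i > k \<Longrightarrow> coeff h i = 0" unfolding k_def by (simp add: coeff_eq_0)
    have R: "(\<Sum>i\<le>j. coeff h i * (T ^^ i) (coeff g (j - i))) = coeff P j"
      unfolding CF by (rule sum_restrict_le[symmetric]) (simp add: hz)
    have L: "(\<Sum>i\<le>j. coeff h i * (T ^^ i) (Rg (j - i)))
        = (\<Sum>i\<le>k. if i \<le> j then coeff h i * (T ^^ i) (Rg (j - i)) else 0)"
      by (rule sum_restrict_le[symmetric]) (simp add: hz)
    show "?thesis j"
    proof (cases "j \<le> n")
      case False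
      have "(\<Sum>i\<le>k. if i \<le> j then coeff h i * (T ^^ i) (Rg (j - i)) else 0) = 0"
        using False nkm by (intro sum.neutral) (auto simp: Rg_def Tpow0)
      then show ?thesis using L R False vanish nkm by simp
    next
      case True
      note jn = True
      have "coeff P (n - j) = (\<Sum>i\<le>k. if i \<le> n - j then coeff h i * (T ^^ i) (coeff g (n - j - i)) else 0)"
        by (rule CF)
      also have "\<dots> = (\<Sum>i\<le>k. if k - i \<le> n - j then coeff h (k - i) * (T ^^ (k - i)) (coeff g (n - j - (k - i))) else 0)"
        by (rule sum.reindex_bij_witness[where i="\<lambda>i. k - i" and j="\<lambda>i. k - i"]) auto
      also have "\<dots> = (\<Sum>i\<le>k. if i \<le> j then coeff h i * (T ^^ i) (Rg (j - i)) else 0)"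
      proof (rule sum.cong)
        fix i assume "i \<in> {..k}"
        then have ik: "i \<le> k" by simp
        have e1: "coeff h (k - i) = coeff h i" using hpal[OF ik] by simp
        have e2: "\<And>x. (T ^^ (k - i)) x = (T ^^ i) x" using Tpow keven ik by simp
        show "(if k - i \<le> n - j then coeff h (k - i) * (T ^^ (k - i)) (coeff g (n - j - (k - i))) else 0)
            = (if i \<le> j then coeff h i * (T ^^ i) (Rg (j - i)) else 0)"
        proof (cases "i \<le> j")
          case ij: True
          show ?thesis
          proof (cases "j - i \<le> m")
            case True
            then have "k - i \<le> n - j" "n - j - (k - i) = m - (j - i)" using ij ik nkm jn by auto
            then show ?thesis using ij True e1 e2 by (simp add: Rg_def)
          next
            case False
            then have "\<not> k - i \<le> n - j" using ij ik nkm jn by auto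
            then show ?thesis using ij False by (simp add: Rg_def Tpow0)
          qed
        next
          case False
          then have "n - j - (k - i) > m" if "k - i \<le> n - j" using that ik nkm jn by auto
          then have "k - i \<le> n - j \<Longrightarrow> coeff g (n - j - (k - i)) = 0"
            unfolding m_def by (intro coeff_eq_0) auto
          then show ?thesis using False by (simp add: Tpow0)
        qed
      qed simp
      finally show ?thesis using L R Psym[OF True] by simp
    qed
  qed
  have eqR: "\<And>j. Rg j = coeff g j"
    by (rule cancel_left[of "coeff h" T, OF h00 Tinj key])
  show ?thesis
    unfolding palindromic_def
  proof (intro allI impI)
    fix i assume "i \<le> degree g"
    then show "coeff g i = coeff g (degree g - i)"
      using eqR[of i] unfolding Rg_def m_def by simp
  qed
qed

end
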